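(* Let $r>0$, $d>0$ with $d\sqrt{2}<r$, and let $X\subseteq\mathbb{R}^2$ be a bounded $r$-regular set whose boundary contains no point of $d\mathbb{Z}^2$. Let $Q$ be the $2d\times 2d$ square formed by a $2\times 2$ block of pixels of the lattice $d\mathbb{Z}^2$, all four of which are grey. Then $\partial X$ does not intersect all four edges (sides of length $2d$) of $Q$.
   Context: A closed set $X\subseteq\mathbb{R}^2$ is $r$-regular if for each $x\in\partial X$ there are two open balls of radius $r$, $B_r(x_b)\subseteq X$ and $B_r(x_w)\subseteq \mathbb{R}^2\setminus X$, with $\overline{B_r(x_b)}\cap\overline{B_r(x_w)}=\{x\}$. Pixels are the closed squares $[dk,d(k+1)]\times[dl,d(l+1)]$, $k,l\in\mathbb{Z}$. A pixel $P$ is black if $\mathrm{area}(X\cap P)=d^2$, white if $\mathrm{area}(X\cap P)=0$, and grey otherwise. *)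

theory Defs
  imports "HOL-Analysis.Analysis"
begin

text \<open>Points of the plane are pairs of reals; the product metric is Euclidean.\<close>

definition r_regular :: "real \<Rightarrow> (real \<times> real) set \<Rightarrow> bool" where
  "r_regular r X \<longleftrightarrow> closed X \<and>
     (\<forall>x\<in>frontier X. \<exists>xb xw. ball xb r \<subseteq> X \<and> ball xw r \<subseteq> - X \<and>
                              cball xb r \<inter> cball xw r = {x})"

definition pixel :: "real \<Rightarrow> int \<Rightarrow> int \<Rightarrow> (real \<times> real) set" where
  "pixel d k l = {d * of_int k .. d * of_int (k + 1)} \<times> {d * of_int l .. d * of_int (l + 1)}"

definition area :: "(real \<times> real) set \<Rightarrow> real" where
  "area S = measure lborel S"

definition grey_pixel :: "real \<Rightarrow> (real \<times> real) set \<Rightarrow> int \<Rightarrow> int \<Rightarrow> bool" where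
  "grey_pixel d X k l \<longleftrightarrow> area (X \<inter> pixel d k l) \<noteq> d\<^sup>2 \<and> area (X \<inter> pixel d k l) \<noteq> 0"

definition square_edges :: "real \<Rightarrow> real \<Rightarrow> real \<Rightarrow> (real \<times> real) set set" where
  "square_edges a b s =
     { {a..a+s} \<times> {b}, {a..a+s} \<times> {b+s}, {a} \<times> {b..b+s}, {a+s} \<times> {b..b+s} }"

end

theory Submission
  imports Defs
begin



lemma pixel_cbox: "pixel d k l = cbox (d * of_int k, d * of_int l) (d * of_int (k+1), d * of_int (l+1))"
  unfolding pixel_def by (simp add: cbox_Pair_eq)

lemma measure_pixel:
  assumes "d > 0" shows "measure lborel (pixel d k l) = d\<^sup>2"
proof -
  have le: "d * of_int k \<le> d * of_int (k+1)" "d * of_int l \<le> d * of_int (l+1)" using assms by simp_all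
  show ?thesis unfolding pixel_cbox measure_lborel_cbox_eq using le
    by (simp add: Basis_prod_def algebra_simps power2_eq_square)
qed


lemma grey_frontier:
  assumes "d > 0" and "grey_pixel d X k l"
  shows "\<exists>f\<in>frontier X. f \<in> pixel d k l"
proof (rule ccontr)
  assume "\<not> (\<exists>f\<in>frontier X. f \<in> pixel d k l)"
  hence nf: "pixel d k l \<inter> frontier X = {}" by auto
  have conn: "connected (pixel d k l)" unfolding pixel_cbox by (simp add: convex_connected)
  have "\<not> (pixel d k l \<inter> X \<noteq> {} \<and> pixel d k l - X \<noteq> {})"
    using connected_Int_frontier[OF conn] nf by blast
  hence disj: "pixel d k l \<subseteq> X \<or> X \<inter> pixel d k l = {}" by blast
  have "area (X \<inter> pixel d k l) \<noteq> d\<^sup>2" "area (X \<inter> pixel d k l) \<noteq> 0"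
    using assms(2) unfolding grey_pixel_def by auto
  from disj show False
  proof
    assume "pixel d k l \<subseteq> X"
    hence "X \<inter> pixel d k l = pixel d k l" by blast
    thus False using \<open>area (X \<inter> pixel d k l) \<noteq> d\<^sup>2\<close> measure_pixel[OF assms(1)] unfolding area_def by simp
  next
    assume "X \<inter> pixel d k l = {}"
    thus False using \<open>area (X \<inter> pixel d k l) \<noteq> 0\<close> unfolding area_def by simp
  qed
qed

lemma dist_sq: "(dist p q)\<^sup>2 = (fst p - fst q)\<^sup>2 + (snd p - snd q)\<^sup>2" for p q :: "real \<times> real"
  by (cases p, cases q) (simp add: dist_Pair_Pair dist_real_def)

lemma dist_ge_sq: "0 \<le> r \<Longrightarrow> r \<le> dist p q \<Longrightarrow> r\<^sup>2 \<le> (fst p - fst q)\<^sup>2 + (snd p - snd q)\<^sup>2" for p q :: "real \<times> real"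
  using dist_sq[of p q] power_mono by metis

lemma horn_b:
  assumes "ball p r \<subseteq> X" and "y \<in> frontier X" shows "r \<le> dist p y"
proof (rule ccontr)
  assume "\<not> r \<le> dist p y"
  hence "y \<in> ball p r" by simp
  moreover have "ball p r \<subseteq> interior X" using assms(1) by (simp add: interior_maximal)
  ultimately have "y \<in> interior X" by blast
  thus False using assms(2) by (simp add: frontier_def)
qed

lemma horn_w:
  assumes "closed X" and "ball p r \<subseteq> - X" and "y \<in> frontier X" shows "r \<le> dist p y"
proof (rule ccontr)
  assume "\<not> r \<le> dist p y"
  hence "y \<in> ball p r" by simp
  hence "y \<notin> X" using assms(2) by blast
  moreover have "y \<in> X" using assms(3) assms(1) frontier_subset_closed by blast
  ultimately show False by blast
qed

lemma ball_disj:
  fixes a b :: "'a::real_normed_vector"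
  assumes "ball a r \<inter> ball b s = {}" and "r > 0" and "s > 0" shows "r + s \<le> dist a b"
proof (rule ccontr)
  assume h: "\<not> r + s \<le> dist a b"
  define t where "t = r/(r+s)"
  define p where "p = a + t *\<^sub>R (b - a)"
  have t0: "0 < t" "t < 1" unfolding t_def using assms by (auto simp: field_simps)
  have "dist a p = t * dist a b" unfolding p_def by (simp add: dist_norm t0(1) less_imp_le norm_minus_commute)
  also have "\<dots> < t*(r+s)" using h t0 by simp
  also have "\<dots> = r" unfolding t_def using assms by simp
  finally have pa: "p \<in> ball a r" by simp
  have "b - p = (1 - t) *\<^sub>R (b - a)" unfolding p_def by (simp add: algebra_simps)
  hence "dist b p = (1 - t) * dist a b" using t0 by (simp add: dist_norm norm_minus_commute)
  also have "\<dots> < (1-t)*(r+s)" using h t0 by simp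
  also have "\<dots> = s" unfolding t_def using assms by (simp add: field_simps)
  finally have pb: "p \<in> ball b s" by simp
  show False using pa pb assms(1) by blast
qed


lemma reg_normal:
  assumes reg: "r_regular r X" and r0: "r > 0" and x: "x \<in> frontier X"
  shows "\<exists>n::real\<times>real. norm n = 1 \<and> ball (x + r *\<^sub>R n) r \<subseteq> X \<and> ball (x - r *\<^sub>R n) r \<subseteq> - X"
proof -
  obtain xb xw where b: "ball xb r \<subseteq> X" and w: "ball xw r \<subseteq> - X" and I: "cball xb r \<inter> cball xw r = {x}"
    using reg x unfolding r_regular_def by blast
  have xb: "dist xb x \<le> r" and xw: "dist xw x \<le> r" using I by auto
  have D: "dist xb xw = 2* r"
  proof (rule antisym)
    show "dist xb xw \<le> 2* r" using dist_triangle[of xb xw x] xb xw by (simp add: dist_commute)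
  next
    show "2* r \<le> dist xb xw"
    proof (rule ccontr)
      assume "\<not> 2* r \<le> dist xb xw"
      define m where "m = midpoint xb xw"
      define e where "e = r - dist xb xw / 2"
      have e0: "e > 0" unfolding e_def using \<open>\<not> 2* r \<le> dist xb xw\<close> by simp
      have sub: "cball m e \<subseteq> cball xb r \<inter> cball xw r"
      proof
        fix y assume "y \<in> cball m e"
        hence "dist m y \<le> e" by simp
        moreover have "dist xb y \<le> dist xb m + dist m y" by (rule dist_triangle)
        moreover have "dist xw y \<le> dist xw m + dist m y" by (rule dist_triangle)
        moreover have "dist xb m = dist xb xw / 2" "dist xw m = dist xb xw / 2"
          unfolding m_def by (simp_all add: dist_midpoint)
        ultimately show "y \<in> cball xb r \<inter> cball xw r" unfolding e_def by simp
      qed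
      have "m \<in> cball m e" "m + (e, 0) \<in> cball m e" using e0 by (simp_all add: dist_norm)
      hence "m = x" "m + (e, 0) = x" using sub I by blast+
      hence "(e, 0) = (0::real\<times>real)" by (metis add_cancel_right_right)
      thus False using e0 by (simp add: zero_prod_def)
    qed
  qed
  define a where "a = xb - x"
  define b where "b = x - xw"
  have na: "norm a \<le> r" and nb: "norm b \<le> r" unfolding a_def b_def using xb xw by (simp_all add: dist_norm norm_minus_commute)
  have nab: "norm (a + b) = 2* r" unfolding a_def b_def using D by (simp add: dist_norm)
  have "norm (a + b) \<le> norm a + norm b" by (rule norm_triangle_ineq)
  hence na': "norm a = r" and nb': "norm b = r" using na nb nab by linarith+
  have par: "(norm (a - b))\<^sup>2 = 2*(norm a)\<^sup>2 + 2*(norm b)\<^sup>2 - (norm (a+b))\<^sup>2"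
    by (simp add: power2_norm_eq_inner inner_add_left inner_add_right inner_diff_left inner_diff_right inner_commute algebra_simps)
  hence "(norm (a - b))\<^sup>2 = 0" using na' nb' nab by (simp add: power2_eq_square)
  hence ab: "a = b" by simp
  define n where "n = (1/r) *\<^sub>R a"
  have nn: "norm n = 1" unfolding n_def using na' r0 by simp
  have ra: "r *\<^sub>R n = a" unfolding n_def using r0 by simp
  have "x + r *\<^sub>R n = xb" using ra unfolding a_def by simp
  moreover have "x - r *\<^sub>R n = xw" using ra ab unfolding b_def by simp
  ultimately have "x + r *\<^sub>R n = xb" "x - r *\<^sub>R n = xw" by simp_all
  thus ?thesis using nn b w by metis
qed

lemma normal_eq:
  fixes n c z :: "real \<times> real"
  assumes n: "norm n = 1" and d0: "\<delta> > 0" and dz: "dist c z = \<delta>" and r0: "r > 0"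
    and h: "r + \<delta> \<le> dist (z - r *\<^sub>R n) c"
  shows "n = (1/\<delta>) *\<^sub>R (c - z)"
proof -
  define w where "w = c - z"
  have nw: "norm w = \<delta>" unfolding w_def using dz by (simp add: dist_norm)
  have "dist (z - r *\<^sub>R n) c = norm (r *\<^sub>R n + w)" unfolding w_def
    by (simp add: dist_norm norm_minus_commute algebra_simps)
  hence h': "r + \<delta> \<le> norm (r *\<^sub>R n + w)" using h by simp
  have nn: "n \<bullet> n = 1" using n by (simp add: power2_norm_eq_inner[symmetric])
  have ww: "w \<bullet> w = \<delta>\<^sup>2" using nw by (simp add: power2_norm_eq_inner[symmetric])
  have "(r + \<delta>)\<^sup>2 \<le> (norm (r *\<^sub>R n + w))\<^sup>2" using h' r0 d0 by (intro power_mono) auto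
  moreover have "(norm (r *\<^sub>R n + w))\<^sup>2 = (r *\<^sub>R n + w) \<bullet> (r *\<^sub>R n + w)" by (simp add: power2_norm_eq_inner)
  moreover have "(r *\<^sub>R n + w) \<bullet> (r *\<^sub>R n + w) = r\<^sup>2*(n \<bullet> n) + 2* r*(n \<bullet> w) + w \<bullet> w"
    by (simp add: inner_add_left inner_add_right inner_commute algebra_simps power2_eq_square)
  ultimately have "(r + \<delta>)\<^sup>2 \<le> r\<^sup>2 + 2* r*(n \<bullet> w) + \<delta>\<^sup>2" using nn ww by simp
  hence "2* r*\<delta> \<le> 2* r*(n \<bullet> w)" by (simp add: power2_eq_square algebra_simps)
  hence nwd: "\<delta> \<le> n \<bullet> w" using r0 by simp
  have "(norm (n - (1/\<delta>) *\<^sub>R w))\<^sup>2 = (n - (1/\<delta>) *\<^sub>R w) \<bullet> (n - (1/\<delta>) *\<^sub>R w)" by (simp add: power2_norm_eq_inner)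
  also have "\<dots> = n \<bullet> n - 2*(1/\<delta>)*(n \<bullet> w) + (1/\<delta>)\<^sup>2*(w \<bullet> w)"
    by (simp add: inner_diff_left inner_diff_right inner_commute algebra_simps power2_eq_square)
  also have "\<dots> = 2 - 2*(n \<bullet> w)/\<delta>" using nn ww d0 by (simp add: field_simps power2_eq_square)
  also have "\<dots> \<le> 0" using nwd d0 by (simp add: field_simps)
  finally have "(norm (n - (1/\<delta>) *\<^sub>R w))\<^sup>2 \<le> 0" .
  hence "(norm (n - (1/\<delta>) *\<^sub>R w))\<^sup>2 = 0" using zero_le_power2 by (rule antisym)
  hence "norm (n - (1/\<delta>) *\<^sub>R w) = 0" by simp
  thus ?thesis unfolding w_def by simp
qed


lemma nearest_normal:
  fixes c :: "real \<times> real"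
  assumes reg: "r_regular r X" and r0: "r > 0" and cF: "c \<notin> frontier X" and ne: "frontier X \<noteq> {}"
  shows "\<exists>z v \<delta>. z \<in> frontier X \<and> \<delta> > 0 \<and> (\<forall>y\<in>frontier X. \<delta> \<le> dist c y) \<and> norm v = 1 \<and> z = c - \<delta> *\<^sub>R v
     \<and> (\<forall>y\<in>frontier X. r \<le> dist (z + r *\<^sub>R v) y \<and> r \<le> dist (z - r *\<^sub>R v) y)"
proof -
  have clX: "closed X" using reg unfolding r_regular_def by simp
  obtain z where zF: "z \<in> frontier X" and zmin: "\<And>y. y \<in> frontier X \<Longrightarrow> dist c z \<le> dist c y"
    using distance_attains_inf[OF frontier_closed ne] by blast
  define \<delta> where "\<delta> = dist c z"
  have d0: "\<delta> > 0" unfolding \<delta>_def using zF cF by (metis dist_pos_lt)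
  define v where "v = (1/\<delta>) *\<^sub>R (c - z)"
  have nv: "norm v = 1" unfolding v_def using d0 by (simp add: \<delta>_def dist_norm)
  have zv: "z = c - \<delta> *\<^sub>R v" unfolding v_def using d0 by simp
  obtain n where nn: "norm n = 1" and Bb: "ball (z + r *\<^sub>R n) r \<subseteq> X" and Bw: "ball (z - r *\<^sub>R n) r \<subseteq> - X"
    using reg_normal[OF reg r0 zF] by blast
  have nf: "ball c \<delta> \<inter> frontier X = {}"
  proof (rule ccontr)
    assume "ball c \<delta> \<inter> frontier X \<noteq> {}"
    then obtain y where "y \<in> frontier X" "dist c y < \<delta>" by auto
    thus False using zmin unfolding \<delta>_def by fastforce
  qed
  have "\<not> (ball c \<delta> \<inter> X \<noteq> {} \<and> ball c \<delta> - X \<noteq> {})"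
    using connected_Int_frontier[OF connected_ball] nf by blast
  hence bcases: "ball c \<delta> \<subseteq> X \<or> ball c \<delta> \<subseteq> - X" by blast
  have dz: "dist c z = \<delta>" unfolding \<delta>_def by simp
  have nv2: "n = v \<or> n = - v"
    using bcases
  proof
    assume "ball c \<delta> \<subseteq> X"
    hence "ball (z - r *\<^sub>R n) r \<inter> ball c \<delta> = {}" using Bw by blast
    hence "r + \<delta> \<le> dist (z - r *\<^sub>R n) c" using ball_disj r0 d0 by blast
    hence "n = v" using normal_eq[OF nn d0 dz r0] unfolding v_def by simp
    thus ?thesis by simp
  next
    assume "ball c \<delta> \<subseteq> - X"
    hence "ball (z - r *\<^sub>R (-n)) r \<inter> ball c \<delta> = {}" using Bb by auto
    hence "r + \<delta> \<le> dist (z - r *\<^sub>R (-n)) c" using ball_disj r0 d0 by blast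
    hence "-n = v" using normal_eq[of "-n", OF _ d0 dz r0] nn unfolding v_def by simp
    thus ?thesis by auto
  qed
  have hb: "\<And>y. y \<in> frontier X \<Longrightarrow> r \<le> dist (z + r *\<^sub>R n) y" using horn_b[OF Bb] by blast
  have hw: "\<And>y. y \<in> frontier X \<Longrightarrow> r \<le> dist (z - r *\<^sub>R n) y" using horn_w[OF clX Bw] by blast
  have "\<forall>y\<in>frontier X. r \<le> dist (z + r *\<^sub>R v) y \<and> r \<le> dist (z - r *\<^sub>R v) y"
    using nv2
  proof
    assume "n = v" thus ?thesis using hb hw by blast
  next
    assume "n = -v" thus ?thesis using hb hw by (simp add: algebra_simps)
  qed
  moreover have "\<forall>y\<in>frontier X. \<delta> \<le> dist c y" using zmin unfolding \<delta>_def by blast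
  ultimately show ?thesis using zF d0 nv zv by blast
qed




lemma stepF:
  fixes a b C S \<rho> Dl r :: real
  assumes a0: "0 \<le> a" and a1: "a \<le> 1" and b0: "0 \<le> b" and b1: "b \<le> 1"
    and CS: "C\<^sup>2 + S\<^sup>2 = 1" and S0: "0 \<le> S" and SC: "S \<le> C" and r0: "\<rho> \<ge> 0"
    and D0: "Dl > 0" and r2: "r\<^sup>2 > 2" and Dd: "Dl = r\<^sup>2 - \<rho>\<^sup>2"
    and F: "a\<^sup>2 + b\<^sup>2 - 2*\<rho>*(a* C + b* S) \<ge> Dl"
  shows "2*\<rho>* C \<ge> 1 \<and> 1 - 2*\<rho>* S \<ge> Dl"
proof -
  have "a\<^sup>2 \<le> a" using a0 a1 by (simp add: power2_eq_square mult_left_le)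
  moreover have "b\<^sup>2 \<le> b" using b0 b1 by (simp add: power2_eq_square mult_left_le)
  ultimately have h: "a*(1 - 2*\<rho>* C) + b*(1 - 2*\<rho>* S) \<ge> Dl" using F by (simp add: algebra_simps)
  have "S\<^sup>2 \<le> C\<^sup>2" using SC S0 by (rule power_mono)
  hence C2: "2* C\<^sup>2 \<ge> 1" using CS by linarith
  have C0: "C \<ge> 0" using S0 SC by simp
  have CS1: "C + S \<ge> 1"
  proof -
    have "(C+S)\<^sup>2 \<ge> 1" using CS mult_nonneg_nonneg[OF C0 S0] by (simp add: power2_eq_square algebra_simps)
    hence "1\<^sup>2 \<le> (C+S)\<^sup>2" by simp
    thus ?thesis by (rule power2_le_imp_le) (use C0 S0 in linarith)
  qed
  show ?thesis
  proof (cases "2*\<rho>* C < 1")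
    case True
    have x0: "2*\<rho>* C \<ge> 0" using r0 C0 by simp
    have "(2*\<rho>* C)*(2*\<rho>* C) \<le> (2*\<rho>* C)*1" using x0 True by (intro mult_left_mono) auto
    hence "(2*\<rho>* C)*(2*\<rho>* C) \<le> 2*\<rho>* C" by simp
    hence "(2*\<rho>* C)*(2*\<rho>* C) < 1" using True by linarith
    hence "(2*\<rho>* C)\<^sup>2 < 1" by (simp only: power2_eq_square)
    hence q: "4*(\<rho>\<^sup>2* C\<^sup>2) < 1" by (simp add: power_mult_distrib)
    have "\<rho>\<^sup>2 * 1 \<le> \<rho>\<^sup>2 * (2* C\<^sup>2)" using C2 by (intro mult_left_mono) auto
    hence "2*\<rho>\<^sup>2 < 1" using q by linarith
    hence \<rho>1: "\<rho> < 1"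
    proof -
      assume h2: "2*\<rho>\<^sup>2 < 1"
      show "\<rho> < 1"
      proof (rule ccontr)
        assume "\<not> \<rho> < 1"
        hence "1*1 \<le> \<rho>*\<rho>" by (intro mult_mono) auto
        thus False using h2 by (simp add: power2_eq_square)
      qed
    qed
    have p1: "a*(1 - 2*\<rho>* C) \<le> 1 - 2*\<rho>* C" using a1 True by (simp add: mult_left_le_one_le)
    have "2*\<rho>* S \<le> 2*\<rho>* C" using SC r0 by (simp add: mult_left_mono)
    hence p2: "b*(1 - 2*\<rho>* S) \<le> 1 - 2*\<rho>* S" using b1 b0 True by (simp add: mult_left_le_one_le)
    have "2 - 2*\<rho>*(C+S) \<ge> r\<^sup>2 - \<rho>\<^sup>2" using h p1 p2 Dd by (simp add: algebra_simps)
    moreover have "\<rho>*1 \<le> \<rho>*(C+S)" using CS1 r0 by (intro mult_left_mono) auto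
    moreover have "\<rho>\<^sup>2 \<le> \<rho>" using r0 \<rho>1 by (simp add: power2_eq_square mult_left_le_one_le)
    moreover have "2*\<rho>*(C+S) = 2*(\<rho>*(C+S))" "\<rho>*1 = \<rho>" by simp_all
    ultimately show ?thesis using r2 r0 by linarith
  next
    case False
    hence "a*(1 - 2*\<rho>* C) \<le> 0" using a0 by (simp add: mult_nonneg_nonpos)
    hence hb: "b*(1 - 2*\<rho>* S) \<ge> Dl" using h by linarith
    have "1 - 2*\<rho>* S > 0"
    proof (rule ccontr)
      assume "\<not> 1 - 2*\<rho>* S > 0"
      hence "b*(1 - 2*\<rho>* S) \<le> 0" using b0 by (intro mult_nonneg_nonpos) auto
      thus False using hb D0 by linarith
    qed
    hence "b*(1 - 2*\<rho>* S) \<le> 1 - 2*\<rho>* S" using b1 by (simp add: mult_left_le_one_le)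
    thus ?thesis using False hb by linarith
  qed
qed



lemma cross_contra:
  fixes p1 p2 q1 q2 n1 n2 r :: real
  assumes n: "n1\<^sup>2 + n2\<^sup>2 = 1" and r2: "r\<^sup>2 > 2"
    and hp: "4* r\<^sup>2*(p1* n1 - p2* n2)\<^sup>2 \<le> (p1\<^sup>2 + p2\<^sup>2)\<^sup>2"
    and hq: "4* r\<^sup>2*(q1* n1 + q2* n2)\<^sup>2 \<le> (q1\<^sup>2 + q2\<^sup>2)\<^sup>2"
  shows "4*(p1* q2 + p2* q1)\<^sup>2 \<le> (p1\<^sup>2 + p2\<^sup>2)*(q1\<^sup>2 + q2\<^sup>2)*((p1\<^sup>2+p2\<^sup>2) + (q1\<^sup>2+q2\<^sup>2))"
proof -
  define \<alpha> where "\<alpha> = p1* n1 - p2* n2"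
  define \<alpha>' where "\<alpha>' = p1* n2 + p2* n1"
  define \<beta> where "\<beta> = q1* n1 + q2* n2"
  define \<beta>' where "\<beta>' = q1* n2 - q2* n1"
  define P where "P = p1\<^sup>2 + p2\<^sup>2"
  define Q where "Q = q1\<^sup>2 + q2\<^sup>2"
  define D where "D = p1* q2 + p2* q1"
  have eP: "\<alpha>\<^sup>2 + \<alpha>'\<^sup>2 = P"
  proof -
    have "\<alpha>\<^sup>2 + \<alpha>'\<^sup>2 = (p1\<^sup>2 + p2\<^sup>2)*(n1\<^sup>2 + n2\<^sup>2)"
      unfolding \<alpha>_def \<alpha>'_def by (simp add: power2_eq_square algebra_simps)
    thus ?thesis using n P_def by simp
  qed
  have eQ: "\<beta>\<^sup>2 + \<beta>'\<^sup>2 = Q"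
  proof -
    have "\<beta>\<^sup>2 + \<beta>'\<^sup>2 = (q1\<^sup>2 + q2\<^sup>2)*(n1\<^sup>2 + n2\<^sup>2)"
      unfolding \<beta>_def \<beta>'_def by (simp add: power2_eq_square algebra_simps)
    thus ?thesis using n Q_def by simp
  qed
  have eD: "\<alpha>*\<beta>' - \<alpha>'*\<beta> = - D*(n1\<^sup>2 + n2\<^sup>2)"
    unfolding \<alpha>_def \<alpha>'_def \<beta>_def \<beta>'_def D_def by (simp add: power2_eq_square algebra_simps)
  hence eD2: "D\<^sup>2 = (\<alpha>*\<beta>' - \<alpha>'*\<beta>)\<^sup>2" using n by simp
  have "(\<alpha>*\<beta>' - \<alpha>'*\<beta>)\<^sup>2 \<le> 2*(\<alpha>\<^sup>2*\<beta>'\<^sup>2 + \<alpha>'\<^sup>2*\<beta>\<^sup>2)"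
  proof -
    have "0 \<le> (\<alpha>*\<beta>' + \<alpha>'*\<beta>)\<^sup>2" by simp
    thus ?thesis by (simp add: power2_eq_square algebra_simps)
  qed
  also have "\<dots> \<le> 2*(\<alpha>\<^sup>2* Q + P*\<beta>\<^sup>2)"
  proof -
    have "\<alpha>\<^sup>2*\<beta>'\<^sup>2 \<le> \<alpha>\<^sup>2* Q" using eQ by (intro mult_left_mono) auto
    moreover have "\<alpha>'\<^sup>2*\<beta>\<^sup>2 \<le> P*\<beta>\<^sup>2" using eP by (intro mult_right_mono) auto
    ultimately show ?thesis by simp
  qed
  finally have h1: "D\<^sup>2 \<le> 2*(\<alpha>\<^sup>2* Q + P*\<beta>\<^sup>2)" using eD2 by simp
  have Q0: "Q \<ge> 0" and P0: "P \<ge> 0" unfolding Q_def P_def by simp_all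
  have "(4* r\<^sup>2)* D\<^sup>2 \<le> (4* r\<^sup>2)*(2*(\<alpha>\<^sup>2* Q + P*\<beta>\<^sup>2))"
    using h1 by (intro mult_left_mono) auto
  hence "4* r\<^sup>2* D\<^sup>2 \<le> 2*((4* r\<^sup>2*\<alpha>\<^sup>2)* Q + P*(4* r\<^sup>2*\<beta>\<^sup>2))"
    by (simp add: algebra_simps)
  also have "\<dots> \<le> 2*(P\<^sup>2* Q + P* Q\<^sup>2)"
  proof -
    have "(4* r\<^sup>2*\<alpha>\<^sup>2)* Q \<le> P\<^sup>2* Q" using hp Q0 unfolding \<alpha>_def P_def by (intro mult_right_mono) auto
    moreover have "P*(4* r\<^sup>2*\<beta>\<^sup>2) \<le> P* Q\<^sup>2" using hq P0 unfolding \<beta>_def Q_def by (intro mult_left_mono) auto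
    ultimately show ?thesis by simp
  qed
  finally have h2: "4* r\<^sup>2* D\<^sup>2 \<le> 2*(P\<^sup>2* Q + P* Q\<^sup>2)" .
  have "8* D\<^sup>2 \<le> 4* r\<^sup>2* D\<^sup>2" using r2 by (intro mult_right_mono) auto
  hence "8* D\<^sup>2 \<le> 2*(P\<^sup>2* Q + P* Q\<^sup>2)" using h2 by linarith
  hence "4* D\<^sup>2 \<le> P* Q*(P+Q)" by (simp add: power2_eq_square algebra_simps)
  thus ?thesis unfolding D_def P_def Q_def .
qed



lemma stepE:
  fixes y C S \<rho> Dl :: real
  assumes "-1 \<le> y" "y \<le> 1" "\<rho> \<ge> 0" "S \<ge> 0"
    and E: "1 + y\<^sup>2 - 2*\<rho>*(C + y* S) \<ge> Dl"
  shows "2 - 2*\<rho>*(C - S) \<ge> Dl"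
proof -
  have "(1 - y)*(1 + y) \<ge> 0" using assms(1,2) by (intro mult_nonneg_nonneg) auto
  hence "y\<^sup>2 \<le> 1" by (simp add: power2_eq_square algebra_simps)
  moreover have "\<rho>* S*(1 + y) \<ge> 0" using assms by simp
  ultimately show ?thesis using E by (simp add: algebra_simps)
qed

lemma stepA4:
  fixes C S \<rho> Dl r :: real
  assumes CS: "C\<^sup>2 + S\<^sup>2 = 1" and S0: "S \<ge> 0" and r0: "\<rho> > 0" and D0: "Dl > 0"
    and Dd: "Dl = r\<^sup>2 - \<rho>\<^sup>2" and r2: "r\<^sup>2 > 2"
    and W1: "2*\<rho>* C \<ge> 1" and W2: "1 - 2*\<rho>* S \<ge> Dl" and W3: "2 - 2*\<rho>*(C - S) \<ge> Dl"
  shows "Dl \<le> 2255/10000"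
proof -
  have s0: "2*\<rho>* S \<ge> 0" using r0 S0 by simp
  have a: "2*\<rho>* S \<le> 1 - Dl" using W2 by linarith
  have b: "2*\<rho>* C \<le> 3 - 2* Dl" using W3 a by (simp add: algebra_simps)
  have "(2*\<rho>* S)\<^sup>2 \<le> (1 - Dl)\<^sup>2" using a s0 by (intro power_mono) auto
  moreover have "0 \<le> 2*\<rho>* C" using W1 by linarith
  hence "(2*\<rho>* C)\<^sup>2 \<le> (3 - 2* Dl)\<^sup>2" using b by (intro power_mono) auto
  ultimately have "4*\<rho>\<^sup>2*(C\<^sup>2 + S\<^sup>2) \<le> (1 - Dl)\<^sup>2 + (3 - 2* Dl)\<^sup>2" by (simp add: power_mult_distrib algebra_simps)
  hence "4*(r\<^sup>2 - Dl) \<le> (1 - Dl)\<^sup>2 + (3 - 2* Dl)\<^sup>2" using CS Dd by simp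
  hence q: "5* Dl\<^sup>2 - 10* Dl + 2 > 0" using r2 by (simp add: power2_eq_square algebra_simps)
  have D1: "Dl \<le> 1" using a s0 by linarith
  show ?thesis
  proof (rule ccontr)
    assume "\<not> Dl \<le> 2255/10000"
    hence "(Dl - 2255/10000)*(Dl - 1) \<le> 0" using D1 by (intro mult_nonneg_nonpos) auto
    moreover have "(Dl - 2255/10000)*(Dl - 1) = Dl\<^sup>2 - (12255/10000)* Dl + 2255/10000"
      by (simp add: power2_eq_square field_simps)
    ultimately show False using q \<open>\<not> Dl \<le> 2255/10000\<close> by linarith
  qed
qed

lemma stepA5:
  fixes C S \<rho> Dl r :: real
  assumes CS: "C\<^sup>2 + S\<^sup>2 = 1" and S0: "S \<ge> 0" and SC: "S \<le> C" and r0: "\<rho> > 0" and D0: "Dl > 0"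
    and D1: "Dl \<le> 1"
    and Dd: "Dl = r\<^sup>2 - \<rho>\<^sup>2" and r2: "r\<^sup>2 > 2"
    and W2: "1 - 2*\<rho>* S \<ge> Dl" and W3: "2 - 2*\<rho>*(C - S) \<ge> Dl"
  shows "S \<le> 3536/10000 \<and> S \<ge> 2588/10000 \<and> C \<ge> 9354/10000"
proof -
  have rr: "\<rho>\<^sup>2 \<ge> 2 - Dl" using Dd r2 by linarith
  have a: "2*\<rho>* S \<le> 1 - Dl" using W2 by linarith
  have "(2*\<rho>* S)\<^sup>2 \<le> (1 - Dl)\<^sup>2" using a r0 S0 by (intro power_mono) auto
  hence a2: "4*\<rho>\<^sup>2* S\<^sup>2 \<le> (1 - Dl)\<^sup>2" by (simp add: power_mult_distrib)
  have "4*(2 - Dl)* S\<^sup>2 \<le> 4*\<rho>\<^sup>2* S\<^sup>2" using rr by (intro mult_right_mono) auto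
  hence a3: "4*(2 - Dl)* S\<^sup>2 \<le> (1 - Dl)\<^sup>2" using a2 by linarith
  have a4: "2*(1 - Dl)\<^sup>2 \<le> 2 - Dl"
  proof -
    have "Dl*(2* Dl - 3) \<le> 0" using D0 D1 by (intro mult_nonneg_nonpos) auto
    thus ?thesis by (simp add: power2_eq_square algebra_simps)
  qed
  have "(2 - Dl)*(8* S\<^sup>2) \<le> (2 - Dl)*1" using a3 a4 by (simp add: algebra_simps)
  hence S2: "8* S\<^sup>2 \<le> 1" using D1 by (simp add: mult_le_cancel_left)
  have Sb: "S \<le> 3536/10000"
  proof (rule ccontr)
    assume "\<not> S \<le> 3536/10000"
    hence "(3536/10000)\<^sup>2 \<le> S\<^sup>2" by (intro power_mono) auto
    thus False using S2 by (simp add: power2_eq_square)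
  qed
  have c: "2*\<rho>*(C - S) \<le> 2 - Dl" using W3 by linarith
  have "(2*\<rho>*(C - S))\<^sup>2 \<le> (2 - Dl)\<^sup>2" using c r0 SC by (intro power_mono) auto
  hence c2: "4*\<rho>\<^sup>2*(C - S)\<^sup>2 \<le> (2 - Dl)\<^sup>2" by (simp add: power_mult_distrib)
  have "4*(2 - Dl)*(C - S)\<^sup>2 \<le> 4*\<rho>\<^sup>2*(C - S)\<^sup>2" using rr by (intro mult_right_mono) auto
  hence "(2 - Dl)*(4*(C - S)\<^sup>2) \<le> (2 - Dl)*(2 - Dl)" using c2 by (simp add: power2_eq_square algebra_simps)
  hence "4*(C - S)\<^sup>2 \<le> 2 - Dl" using D1 by (simp add: mult_le_cancel_left)
  hence "4*(C - S)\<^sup>2 < 2" using D0 by linarith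
  hence CSp: "4*(C* S) > 1" using CS by (simp add: power2_eq_square algebra_simps)
  have "16*(C* S)\<^sup>2 > 1"
  proof -
    have p0: "(0::real) \<le> 1" by simp
    have "1*1 < (4*(C* S))*(4*(C* S))" using mult_strict_mono[OF CSp CSp _ p0] CSp by linarith
    thus ?thesis by (simp add: power2_eq_square algebra_simps)
  qed
  moreover have "C\<^sup>2 = 1 - S\<^sup>2" using CS by simp
  ultimately have t: "16*(S\<^sup>2*(1 - S\<^sup>2)) > 1" by (simp add: power_mult_distrib algebra_simps)
  have Sl: "S \<ge> 2588/10000"
  proof (rule ccontr)
    assume "\<not> S \<ge> 2588/10000"
    hence "S\<^sup>2 \<le> (2588/10000)\<^sup>2" using S0 by (intro power_mono) auto
    hence "((2588/10000)\<^sup>2 - S\<^sup>2)*(1 - (2588/10000)\<^sup>2 - S\<^sup>2) \<ge> 0"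
      using S2 by (intro mult_nonneg_nonneg) (auto simp: power2_eq_square)
    moreover have "((2588/10000)\<^sup>2 - S\<^sup>2)*(1 - (2588/10000)\<^sup>2 - S\<^sup>2) = (2588/10000)\<^sup>2*(1 - (2588/10000)\<^sup>2) - S\<^sup>2*(1 - S\<^sup>2)"
      by (simp add: algebra_simps)
    ultimately have "S\<^sup>2*(1 - S\<^sup>2) \<le> (2588/10000)\<^sup>2*(1 - (2588/10000)\<^sup>2)" by linarith
    thus False using t by (simp add: power2_eq_square)
  qed
  have "C\<^sup>2 \<ge> (9354/10000)\<^sup>2" using CS S2 by (simp add: power2_eq_square)
  hence "C \<ge> 9354/10000" by (rule power2_le_imp_le) (use S0 SC in linarith)
  thus ?thesis using Sb Sl by simp
qed



lemma stepA6:
  fixes \<rho> Dl r d :: real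
  assumes r0: "r > 0" and r2: "r\<^sup>2 > 2" and p0: "\<rho> > 0" and Dd: "Dl = r\<^sup>2 - \<rho>\<^sup>2"
    and D: "Dl \<le> 2255/10000" and dd: "d = r - \<rho>" and d0: "d > 0"
  shows "\<rho> \<ge> 1332/1000 \<and> d \<le> 827/10000 \<and> r \<ge> 14142/10000"
proof -
  have "(1332/1000)\<^sup>2 \<le> \<rho>\<^sup>2" using Dd D r2 by (simp add: power2_eq_square)
  hence a: "\<rho> \<ge> 1332/1000" by (rule power2_le_imp_le) (use p0 in linarith)
  have "(14142/10000)\<^sup>2 \<le> r\<^sup>2" using r2 by (simp add: power2_eq_square)
  hence b: "r \<ge> 14142/10000" by (rule power2_le_imp_le) (use r0 in linarith)
  have pe: "\<rho> = r - d" using dd by simp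
  have "Dl = d*(r + \<rho>)" unfolding Dd pe by (simp add: power2_eq_square algebra_simps)
  moreover have "d*(r + \<rho>) \<ge> d*(27462/10000)" using a b d0 by (intro mult_left_mono) auto
  ultimately have "d*(27462/10000) \<le> 2255/10000" using D by linarith
  hence "d \<le> 827/10000" by linarith
  thus ?thesis using a b by simp
qed

lemma stepA7:
  fixes a b C S \<rho> Dl :: real
  assumes a0: "0 \<le> a" and a1: "a \<le> 1" and b0: "0 \<le> b" and b1: "b \<le> 1"
    and D0: "Dl > 0" and p: "\<rho> \<ge> 1332/1000" and Sl: "S \<ge> 2588/10000" and Cl: "C \<ge> 9354/10000"
    and F: "a\<^sup>2 + b\<^sup>2 - 2*\<rho>*(a* C + b* S) \<ge> Dl"
  shows "b \<ge> 689/1000 \<and> a \<le> 135/1000"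
proof -
  have "\<rho>* C \<ge> (1332/1000)*(9354/10000)" using p Cl by (intro mult_mono) auto
  hence K: "2*\<rho>* C \<ge> 24919/10000" by simp
  have "\<rho>* S \<ge> (1332/1000)*(2588/10000)" using p Sl by (intro mult_mono) auto
  hence L: "2*\<rho>* S \<ge> 6894/10000" by simp
  have aK: "a*(2*\<rho>* C - a) \<ge> 0" using a0 a1 K by (intro mult_nonneg_nonneg) auto
  have e: "a\<^sup>2 + b\<^sup>2 - 2*\<rho>*(a* C + b* S) = b*(b - 2*\<rho>* S) - a*(2*\<rho>* C - a)"
    by (simp add: power2_eq_square algebra_simps)
  have bb: "b*(b - 2*\<rho>* S) > a*(2*\<rho>* C - a)" using F e D0 by linarith
  hence bp: "b*(b - 2*\<rho>* S) > 0" using aK by linarith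
  have g: "b - 2*\<rho>* S > 0"
  proof (rule ccontr)
    assume "\<not> b - 2*\<rho>* S > 0"
    hence "b*(b - 2*\<rho>* S) \<le> 0" using b0 by (intro mult_nonneg_nonpos) auto
    thus False using bp by linarith
  qed
  hence B: "b \<ge> 689/1000" using L by linarith
  have "b*(b - 2*\<rho>* S) \<le> 1*(b - 2*\<rho>* S)" using b1 g by (intro mult_right_mono) auto
  hence "b*(b - 2*\<rho>* S) \<le> b - 2*\<rho>* S" by simp
  hence u: "a*(2*\<rho>* C - a) < 3106/10000" using bb L b1 by linarith
  have A: "a \<le> 135/1000"
  proof (rule ccontr)
    assume na: "\<not> a \<le> 135/1000"
    have "a*(2*\<rho>* C - a) \<ge> a*(24919/10000 - a)" using K a0 by (intro mult_left_mono) auto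
    moreover have "(a - 135/1000)*(24919/10000 - a - 135/1000) \<ge> 0" using na a1 by (intro mult_nonneg_nonneg) auto
    moreover have "(a - 135/1000)*(24919/10000 - a - 135/1000) = a*(24919/10000 - a) - 3181815/10000000"
      by (simp add: field_simps)
    ultimately show False using u by linarith
  qed
  show ?thesis using A B by simp
qed

lemma stepA8:
  fixes l C S r d Dl :: real
  assumes l0: "-1 \<le> l" and l1: "l \<le> 1" and S0: "S \<ge> 0" and Su: "S \<le> 3536/10000" and Cl: "C \<ge> 9354/10000"
    and r: "r \<ge> 14142/10000" and d0: "d > 0" and du: "d \<le> 827/10000"
    and De: "Dl = 2* r* d - d\<^sup>2" and Du: "Dl \<le> 2255/10000"
    and Lw: "1 + l\<^sup>2 + 2*(r+d)*(l* S - C) + (2* r* d + d\<^sup>2) \<ge> 0"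
  shows "l \<ge> 786/1000"
proof (rule ccontr)
  assume nl: "\<not> l \<ge> 786/1000"
  have dd: "d\<^sup>2 \<le> (827/10000)\<^sup>2" using d0 du by (intro power_mono) auto
  have t: "2* r* d + d\<^sup>2 \<le> 23918/100000" using De Du dd by (simp add: power2_eq_square)
  have l2: "l\<^sup>2 \<le> 1"
  proof -
    have "(1 - l)*(1 + l) \<ge> 0" using l0 l1 by (intro mult_nonneg_nonneg) auto
    thus ?thesis by (simp add: power2_eq_square algebra_simps)
  qed
  show False
  proof (cases "l \<ge> 0")
    case True
    have "l* S \<le> l*(3536/10000)" using True Su by (intro mult_left_mono) auto
    hence cl: "C - l* S \<ge> 9354/10000 - (3536/10000)* l" using Cl by linarith
    have pos: "9354/10000 - (3536/10000)* l \<ge> 0" using nl by linarith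
    have "(r+d)*(C - l* S) \<ge> (14142/10000)*(9354/10000 - (3536/10000)* l)"
      using r d0 cl pos by (intro mult_mono) auto
    hence "1 + l\<^sup>2 + 23918/100000 \<ge> 2*(14142/10000)*(9354/10000 - (3536/10000)* l)"
      using Lw t by (simp add: algebra_simps)
    moreover have "l* l \<le> (786/1000)* l" using True nl by (intro mult_right_mono) auto
    hence "l\<^sup>2 \<le> (786/1000)* l" by (simp add: power2_eq_square)
    ultimately show False using nl True by (simp add: algebra_simps)
  next
    case False
    have "l* S \<le> 0" using False S0 by (simp add: mult_nonpos_nonneg)
    hence cl: "C - l* S \<ge> 9354/10000" using Cl by linarith
    have "(r+d)*(C - l* S) \<ge> (14142/10000)*(9354/10000)"
      using r d0 cl by (intro mult_mono) auto
    hence "1 + l\<^sup>2 + 23918/100000 \<ge> 2*(14142/10000)*(9354/10000)"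
      using Lw t by (simp add: algebra_simps)
    thus False using l2 by linarith
  qed
qed


lemma core:
  fixes r C S d y l a b n1 n2 :: real
  assumes r2: "r\<^sup>2 > 2" and r0: "r > 0" and CS: "C\<^sup>2 + S\<^sup>2 = 1" and S0: "0 \<le> S" and SC: "S \<le> C"
    and d0: "d > 0" and y0: "-1 \<le> y" and y1: "y \<le> 1" and l0: "-1 \<le> l" and l1: "l \<le> 1"
    and a0: "0 \<le> a" and a1: "a \<le> 1" and b0: "0 \<le> b" and b1: "b \<le> 1"
    and n: "n1\<^sup>2 + n2\<^sup>2 = 1"
    and near: "d\<^sup>2 \<le> 1 + y\<^sup>2"
    and E: "(1 - (r-d)* C)\<^sup>2 + (y - (r-d)* S)\<^sup>2 \<ge> r\<^sup>2"
    and F: "(a - (r-d)* C)\<^sup>2 + (b - (r-d)* S)\<^sup>2 \<ge> r\<^sup>2"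
    and Lw: "(-1 + (r+d)* C)\<^sup>2 + (l + (r+d)* S)\<^sup>2 \<ge> r\<^sup>2"
    and H1: "(-1 - a - r* n1)\<^sup>2 + (l - b - r* n2)\<^sup>2 \<ge> r\<^sup>2"
    and H2: "(-1 - a + r* n1)\<^sup>2 + (l - b + r* n2)\<^sup>2 \<ge> r\<^sup>2"
    and H3: "(-d* C - a - r* n1)\<^sup>2 + (-d* S - b - r* n2)\<^sup>2 \<ge> r\<^sup>2"
    and H4: "(-d* C - a + r* n1)\<^sup>2 + (-d* S - b + r* n2)\<^sup>2 \<ge> r\<^sup>2"
  shows False
proof -
  have y2: "y\<^sup>2 \<le> 1"
  proof -
    have "(1 - y)*(1 + y) \<ge> 0" using y0 y1 by (intro mult_nonneg_nonneg) auto
    thus ?thesis by (simp add: power2_eq_square algebra_simps)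
  qed
  have dr: "d < r"
  proof (rule ccontr)
    assume "\<not> d < r"
    hence "r\<^sup>2 \<le> d\<^sup>2" using r0 by (intro power_mono) auto
    thus False using near y2 r2 by linarith
  qed
  define \<rho> where "\<rho> = r - d"
  define Dl where "Dl = r\<^sup>2 - \<rho>\<^sup>2"
  have p0: "\<rho> > 0" using dr \<rho>_def by simp
  have De: "Dl = 2* r* d - d\<^sup>2" unfolding Dl_def \<rho>_def by (simp add: power2_eq_square algebra_simps)
  have D0: "Dl > 0"
  proof -
    have "d*(2* r - d) > 0" using d0 dr by (intro mult_pos_pos) auto
    thus ?thesis using De by (simp add: power2_eq_square algebra_simps)
  qed
  have Fe: "a\<^sup>2 + b\<^sup>2 - 2*\<rho>*(a* C + b* S) \<ge> Dl"
  proof -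
    have "(a - \<rho>* C)\<^sup>2 + (b - \<rho>* S)\<^sup>2 = a\<^sup>2 + b\<^sup>2 - 2*\<rho>*(a* C + b* S) + \<rho>\<^sup>2*(C\<^sup>2 + S\<^sup>2)"
      by (simp add: power2_eq_square algebra_simps)
    thus ?thesis using F CS unfolding Dl_def \<rho>_def by simp
  qed
  have Ee: "1 + y\<^sup>2 - 2*\<rho>*(C + y* S) \<ge> Dl"
  proof -
    have "(1 - \<rho>* C)\<^sup>2 + (y - \<rho>* S)\<^sup>2 = 1 + y\<^sup>2 - 2*\<rho>*(C + y* S) + \<rho>\<^sup>2*(C\<^sup>2 + S\<^sup>2)"
      by (simp add: power2_eq_square algebra_simps)
    thus ?thesis using E CS unfolding Dl_def \<rho>_def by simp
  qed
  have Le: "1 + l\<^sup>2 + 2*(r+d)*(l* S - C) + (2* r* d + d\<^sup>2) \<ge> 0"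
  proof -
    have "(-1 + (r+d)* C)\<^sup>2 + (l + (r+d)* S)\<^sup>2 = 1 + l\<^sup>2 + 2*(r+d)*(l* S - C) + (r+d)\<^sup>2*(C\<^sup>2 + S\<^sup>2)"
      by (simp add: power2_eq_square algebra_simps)
    moreover have "(r+d)\<^sup>2 = r\<^sup>2 + (2* r* d + d\<^sup>2)" by (simp add: power2_eq_square algebra_simps)
    ultimately show ?thesis using Lw CS by simp
  qed
  have W12: "2*\<rho>* C \<ge> 1 \<and> 1 - 2*\<rho>* S \<ge> Dl"
    using stepF[OF a0 a1 b0 b1 CS S0 SC _ D0 r2 _ Fe] p0 Dl_def by simp
  have W3: "2 - 2*\<rho>*(C - S) \<ge> Dl" using stepE[OF y0 y1 _ S0 Ee] p0 by simp
  have DA: "Dl \<le> 2255/10000" using stepA4[OF CS S0 p0 D0 Dl_def r2] W12 W3 by simp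
  have D1: "Dl \<le> 1" using DA by simp
  have A5: "S \<le> 3536/10000 \<and> S \<ge> 2588/10000 \<and> C \<ge> 9354/10000"
    using stepA5[OF CS S0 SC p0 D0 D1 Dl_def r2] W12 W3 by simp
  have A6: "\<rho> \<ge> 1332/1000 \<and> d \<le> 827/10000 \<and> r \<ge> 14142/10000"
    using stepA6[OF r0 r2 p0 Dl_def DA _ d0] \<rho>_def by simp
  have A7: "b \<ge> 689/1000 \<and> a \<le> 135/1000"
    using stepA7[OF a0 a1 b0 b1 D0 _ _ _ Fe] A5 A6 by simp
  have A8: "l \<ge> 786/1000"
    using stepA8[OF l0 l1 S0 _ _ _ d0 _ De DA Le] A5 A6 by simp
  define p1 where "p1 = 1 + a"
  define p2 where "p2 = l - b"
  define q1 where "q1 = d* C + a"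
  define q2 where "q2 = d* S + b"
  define P where "P = p1\<^sup>2 + p2\<^sup>2"
  define Q where "Q = q1\<^sup>2 + q2\<^sup>2"
  have hp: "4* r\<^sup>2*(p1* n1 - p2* n2)\<^sup>2 \<le> (p1\<^sup>2 + p2\<^sup>2)\<^sup>2"
  proof -
    have e1: "(-1 - a - r* n1)\<^sup>2 + (l - b - r* n2)\<^sup>2 = P + 2* r*(p1* n1 - p2* n2) + r\<^sup>2*(n1\<^sup>2 + n2\<^sup>2)"
      unfolding P_def p1_def p2_def by (simp add: power2_eq_square algebra_simps)
    have e2: "(-1 - a + r* n1)\<^sup>2 + (l - b + r* n2)\<^sup>2 = P - 2* r*(p1* n1 - p2* n2) + r\<^sup>2*(n1\<^sup>2 + n2\<^sup>2)"
      unfolding P_def p1_def p2_def by (simp add: power2_eq_square algebra_simps)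
    have "\<bar>2* r*(p1* n1 - p2* n2)\<bar> \<le> P" using H1 H2 e1 e2 n by simp
    hence "\<bar>2* r*(p1* n1 - p2* n2)\<bar>\<^sup>2 \<le> P\<^sup>2" by (intro power_mono) auto
    hence "(2* r*(p1* n1 - p2* n2))\<^sup>2 \<le> P\<^sup>2" by simp
    thus ?thesis unfolding P_def by (simp add: power_mult_distrib)
  qed
  have hq: "4* r\<^sup>2*(q1* n1 + q2* n2)\<^sup>2 \<le> (q1\<^sup>2 + q2\<^sup>2)\<^sup>2"
  proof -
    have e1: "(-d* C - a - r* n1)\<^sup>2 + (-d* S - b - r* n2)\<^sup>2 = Q + 2* r*(q1* n1 + q2* n2) + r\<^sup>2*(n1\<^sup>2 + n2\<^sup>2)"
      unfolding Q_def q1_def q2_def by (simp add: power2_eq_square algebra_simps)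
    have e2: "(-d* C - a + r* n1)\<^sup>2 + (-d* S - b + r* n2)\<^sup>2 = Q - 2* r*(q1* n1 + q2* n2) + r\<^sup>2*(n1\<^sup>2 + n2\<^sup>2)"
      unfolding Q_def q1_def q2_def by (simp add: power2_eq_square algebra_simps)
    have "\<bar>2* r*(q1* n1 + q2* n2)\<bar> \<le> Q" using H3 H4 e1 e2 n by simp
    hence "\<bar>2* r*(q1* n1 + q2* n2)\<bar>\<^sup>2 \<le> Q\<^sup>2" by (intro power_mono) auto
    hence "(2* r*(q1* n1 + q2* n2))\<^sup>2 \<le> Q\<^sup>2" by simp
    thus ?thesis unfolding Q_def by (simp add: power_mult_distrib)
  qed
  have cr: "4*(p1* q2 + p2* q1)\<^sup>2 \<le> P* Q*(P + Q)"
    using cross_contra[OF n r2 hp hq] unfolding P_def Q_def .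
  have lag: "(p1* q2 + p2* q1)\<^sup>2 + (p1* q1 - p2* q2)\<^sup>2 = P* Q"
    unfolding P_def Q_def by (simp add: power2_eq_square algebra_simps)
  have bp1: "1 \<le> p1" "p1 \<le> 1135/1000" using a0 A7 unfolding p1_def by linarith+
  have bp2: "-214/1000 \<le> p2" "p2 \<le> 311/1000" using A7 A8 b1 l1 unfolding p2_def by linarith+
  have dC: "d* C \<le> 827/10000"
  proof -
    have "C\<^sup>2 \<le> 1" using CS zero_le_power2[of S] by linarith
    hence "C\<^sup>2 \<le> 1\<^sup>2" by simp
    hence "C \<le> 1" by (rule power2_le_imp_le) simp
    hence "d* C \<le> d*1" using d0 by (intro mult_left_mono) auto
    thus ?thesis using A6 by simp
  qed
  have dS: "d* S \<le> 293/10000"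
  proof -
    have "d* S \<le> (827/10000)*(3536/10000)" using A5 A6 d0 S0 by (intro mult_mono) auto
    thus ?thesis by simp
  qed
  have dC0: "d* C \<ge> 0" using d0 S0 SC by simp
  have dS0: "d* S \<ge> 0" using d0 S0 by simp
  have bq1: "0 \<le> q1" "q1 \<le> 2177/10000" using a0 A7 dC dC0 unfolding q1_def by linarith+
  have bq2: "689/1000 \<le> q2" "q2 \<le> 10293/10000" using A7 b1 dS dS0 unfolding q2_def by linarith+
  have k1: "p1* q1 - p2* q2 \<le> (534/1000)*(p1* q2)"
  proof -
    have "q1 \<le> (32/100)* q2" using bq1 bq2 by linarith
    hence "p1* q1 \<le> p1*((32/100)* q2)" using bp1 by (intro mult_left_mono) auto
    moreover have "-p2* q2 \<le> (214/1000)* q2" using bp2 bq2 by (intro mult_right_mono) auto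
    moreover have "(214/1000)* q2 \<le> (214/1000)*(p1* q2)" using bp1 bq2 by (simp add: mult_right_mono)
    ultimately show ?thesis by (simp add: algebra_simps)
  qed
  have k2: "p1* q1 - p2* q2 \<ge> -(534/1000)*(p1* q2)"
  proof -
    have "p1* q1 \<ge> 0" using bp1 bq1 by simp
    moreover have "p2* q2 \<le> (311/1000)* q2" using bp2 bq2 by (intro mult_right_mono) auto
    moreover have "(311/1000)* q2 \<le> (534/1000)*(p1* q2)" using bp1 bq2 by (simp add: mult_right_mono)
    ultimately show ?thesis by (simp add: algebra_simps)
  qed
  have "\<bar>p1* q1 - p2* q2\<bar> \<le> (534/1000)*(p1* q2)" by (intro abs_leI) (use k1 k2 in linarith)+
  hence "\<bar>p1* q1 - p2* q2\<bar>\<^sup>2 \<le> ((534/1000)*(p1* q2))\<^sup>2" by (intro power_mono) auto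
  hence "(p1* q1 - p2* q2)\<^sup>2 \<le> ((534/1000)*(p1* q2))\<^sup>2" by simp
  also have "\<dots> = (285156/1000000)*(p1\<^sup>2* q2\<^sup>2)" by (simp add: power_mult_distrib power2_eq_square)
  also have "\<dots> \<le> (285156/1000000)*(P* Q)"
  proof -
    have "p1\<^sup>2* q2\<^sup>2 \<le> P* Q" unfolding P_def Q_def by (intro mult_mono) auto
    thus ?thesis by (intro mult_left_mono) auto
  qed
  finally have k: "(p1* q1 - p2* q2)\<^sup>2 \<le> (285156/1000000)*(P* Q)" .
  have PQ0: "P* Q > 0"
  proof -
    have h1: "1*1 \<le> p1* p1" using bp1 by (intro mult_mono) auto
    have h2: "p2* p2 \<ge> 0" by simp
    have Pp: "P \<ge> 1" unfolding P_def power2_eq_square using h1 h2 by linarith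
    have h3: "q2* q2 > 0" using bq2 by simp
    have h4: "q1* q1 \<ge> 0" by simp
    have Qp: "Q > 0" unfolding Q_def power2_eq_square using h3 h4 by linarith
    show ?thesis using Pp Qp by simp
  qed
  have "(2859376/1000000)*(P* Q) \<le> P* Q*(P+Q)" using cr lag k by linarith
  hence "(P* Q)*(2859376/1000000) \<le> (P* Q)*(P+Q)" by (simp add: algebra_simps)
  hence sPQ: "2859376/1000000 \<le> P + Q" using mult_le_cancel_left_pos[OF PQ0] by blast
  have "p1\<^sup>2 \<le> (1135/1000)\<^sup>2" using bp1 by (intro power_mono) auto
  hence s1: "p1\<^sup>2 \<le> 1288225/1000000" by (simp add: power2_eq_square)
  have "\<bar>p2\<bar> \<le> 311/1000" by (intro abs_leI) (use bp2 in linarith)+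
  hence "\<bar>p2\<bar>\<^sup>2 \<le> (311/1000)\<^sup>2" by (intro power_mono) auto
  hence s2: "p2\<^sup>2 \<le> 96721/1000000" by (simp add: power2_eq_square)
  have "q1\<^sup>2 \<le> (2177/10000)\<^sup>2" using bq1 by (intro power_mono) auto
  hence s3: "q1\<^sup>2 \<le> 4739329/100000000" by (simp add: power2_eq_square)
  have "q2\<^sup>2 \<le> (10293/10000)\<^sup>2" using bq2 by (intro power_mono) auto
  hence s4: "q2\<^sup>2 \<le> 105945849/100000000" by (simp add: power2_eq_square)
  have "P + Q \<le> 24918/10000" unfolding P_def Q_def using s1 s2 s3 s4 by linarith
  thus False using sPQ by linarith
qed


lemma scale_ge:
  fixes A B r d :: real
  assumes "d > 0" and "(d* A)\<^sup>2 + (d* B)\<^sup>2 \<ge> r\<^sup>2"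
  shows "A\<^sup>2 + B\<^sup>2 \<ge> (r/d)\<^sup>2"
proof -
  have "d\<^sup>2*(A\<^sup>2 + B\<^sup>2) \<ge> r\<^sup>2" using assms(2) by (simp add: power_mult_distrib algebra_simps)
  hence "A\<^sup>2 + B\<^sup>2 \<ge> r\<^sup>2/d\<^sup>2" using assms(1) by (simp add: field_simps)
  thus ?thesis by (simp add: power_divide)
qed

lemma core_d:
  fixes r d e C S Y Lc A B N1 N2 :: real
  assumes r2: "r\<^sup>2 > 2* d\<^sup>2" and r0: "r > 0" and d0: "d > 0" and CS: "C\<^sup>2 + S\<^sup>2 = 1"
    and S0: "0 \<le> S" and SC: "S \<le> C" and e0: "e > 0"
    and Yb: "\<bar>Y\<bar> \<le> d" and Lb: "\<bar>Lc\<bar> \<le> d" and A0: "0 \<le> A" and A1: "A \<le> d" and B0: "0 \<le> B" and B1: "B \<le> d"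
    and NN: "N1\<^sup>2 + N2\<^sup>2 = 1"
    and near: "e\<^sup>2 \<le> d\<^sup>2 + Y\<^sup>2"
    and E: "(d - (r-e)* C)\<^sup>2 + (Y - (r-e)* S)\<^sup>2 \<ge> r\<^sup>2"
    and F: "(A - (r-e)* C)\<^sup>2 + (B - (r-e)* S)\<^sup>2 \<ge> r\<^sup>2"
    and Lw: "(-d + (r+e)* C)\<^sup>2 + (Lc + (r+e)* S)\<^sup>2 \<ge> r\<^sup>2"
    and H1: "(-d - A - r* N1)\<^sup>2 + (Lc - B - r* N2)\<^sup>2 \<ge> r\<^sup>2"
    and H2: "(-d - A + r* N1)\<^sup>2 + (Lc - B + r* N2)\<^sup>2 \<ge> r\<^sup>2"
    and H3: "(-e* C - A - r* N1)\<^sup>2 + (-e* S - B - r* N2)\<^sup>2 \<ge> r\<^sup>2"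
    and H4: "(-e* C - A + r* N1)\<^sup>2 + (-e* S - B + r* N2)\<^sup>2 \<ge> r\<^sup>2"
  shows False
proof -
  have dd: "d \<noteq> 0" using d0 by simp
  have m: "\<And>x. d*(x/d) = x" using dd by simp
  have r2': "(r/d)\<^sup>2 > 2"
  proof -
    have "r\<^sup>2/d\<^sup>2 > 2" using r2 d0 by (simp add: field_simps)
    thus ?thesis by (simp add: power_divide)
  qed
  have sc: "\<And>P Q. P\<^sup>2 + Q\<^sup>2 \<ge> r\<^sup>2 \<Longrightarrow> (P/d)\<^sup>2 + (Q/d)\<^sup>2 \<ge> (r/d)\<^sup>2"
  proof -
    fix P Q assume "P\<^sup>2 + Q\<^sup>2 \<ge> r\<^sup>2"
    hence "(d*(P/d))\<^sup>2 + (d*(Q/d))\<^sup>2 \<ge> r\<^sup>2" using m by simp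
    thus "(P/d)\<^sup>2 + (Q/d)\<^sup>2 \<ge> (r/d)\<^sup>2" by (rule scale_ge[OF d0])
  qed
  show False
  proof (rule core[of "r/d" C S "e/d" "Y/d" "Lc/d" "A/d" "B/d" N1 N2])
    show "(r/d)\<^sup>2 > 2" by (rule r2')
    show "r/d > 0" using r0 d0 by simp
    show "C\<^sup>2 + S\<^sup>2 = 1" "0 \<le> S" "S \<le> C" "N1\<^sup>2 + N2\<^sup>2 = 1" by (fact CS S0 SC NN)+
    show "e/d > 0" using e0 d0 by simp
    show "-1 \<le> Y/d" "Y/d \<le> 1" using Yb d0 by (auto simp: field_simps abs_le_iff)
    show "-1 \<le> Lc/d" "Lc/d \<le> 1" using Lb d0 by (auto simp: field_simps abs_le_iff)
    show "0 \<le> A/d" "A/d \<le> 1" "0 \<le> B/d" "B/d \<le> 1" using A0 A1 B0 B1 d0 by (auto simp: field_simps)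
    show "(e/d)\<^sup>2 \<le> 1 + (Y/d)\<^sup>2"
    proof -
      have "e\<^sup>2/d\<^sup>2 \<le> (d\<^sup>2 + Y\<^sup>2)/d\<^sup>2" using near d0 by (intro divide_right_mono) auto
      thus ?thesis using dd by (simp add: power_divide add_divide_distrib)
    qed
    show "(1 - (r/d - e/d)* C)\<^sup>2 + (Y/d - (r/d - e/d)* S)\<^sup>2 \<ge> (r/d)\<^sup>2"
    proof -
      have "1 - (r/d - e/d)* C = (d - (r-e)* C)/d" "Y/d - (r/d - e/d)* S = (Y - (r-e)* S)/d" using dd by (simp_all add: field_simps)
      thus ?thesis using sc[OF E] by simp
    qed
    show "(A/d - (r/d - e/d)* C)\<^sup>2 + (B/d - (r/d - e/d)* S)\<^sup>2 \<ge> (r/d)\<^sup>2"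
    proof -
      have "A/d - (r/d - e/d)* C = (A - (r-e)* C)/d" "B/d - (r/d - e/d)* S = (B - (r-e)* S)/d" using dd by (simp_all add: field_simps)
      thus ?thesis using sc[OF F] by simp
    qed
    show "(-1 + (r/d + e/d)* C)\<^sup>2 + (Lc/d + (r/d + e/d)* S)\<^sup>2 \<ge> (r/d)\<^sup>2"
    proof -
      have "-1 + (r/d + e/d)* C = (-d + (r+e)* C)/d" "Lc/d + (r/d + e/d)* S = (Lc + (r+e)* S)/d" using dd by (simp_all add: field_simps)
      thus ?thesis using sc[OF Lw] by simp
    qed
    show "(-1 - A/d - r/d* N1)\<^sup>2 + (Lc/d - B/d - r/d* N2)\<^sup>2 \<ge> (r/d)\<^sup>2"
    proof -
      have "-1 - A/d - r/d* N1 = (-d - A - r* N1)/d" "Lc/d - B/d - r/d* N2 = (Lc - B - r* N2)/d" using dd by (simp_all add: field_simps)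
      thus ?thesis using sc[OF H1] by simp
    qed
    show "(-1 - A/d + r/d* N1)\<^sup>2 + (Lc/d - B/d + r/d* N2)\<^sup>2 \<ge> (r/d)\<^sup>2"
    proof -
      have "-1 - A/d + r/d* N1 = (-d - A + r* N1)/d" "Lc/d - B/d + r/d* N2 = (Lc - B + r* N2)/d" using dd by (simp_all add: field_simps)
      thus ?thesis using sc[OF H2] by simp
    qed
    show "(-(e/d)* C - A/d - r/d* N1)\<^sup>2 + (-(e/d)* S - B/d - r/d* N2)\<^sup>2 \<ge> (r/d)\<^sup>2"
    proof -
      have "-(e/d)* C - A/d - r/d* N1 = (-e* C - A - r* N1)/d" "-(e/d)* S - B/d - r/d* N2 = (-e* S - B - r* N2)/d" using dd by (simp_all add: field_simps)
      thus ?thesis using sc[OF H3] by simp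
    qed
    show "(-(e/d)* C - A/d + r/d* N1)\<^sup>2 + (-(e/d)* S - B/d + r/d* N2)\<^sup>2 \<ge> (r/d)\<^sup>2"
    proof -
      have "-(e/d)* C - A/d + r/d* N1 = (-e* C - A + r* N1)/d" "-(e/d)* S - B/d + r/d* N2 = (-e* S - B + r* N2)/d" using dd by (simp_all add: field_simps)
      thus ?thesis using sc[OF H4] by simp
    qed
  qed
qed


lemma vec_core:
  fixes r d \<delta> c1 c2 v1 v2 R1 R2 L1 L2 f1 f2 n1 n2 a1 b1 a2 b2 :: real
  assumes fr: "\<And>x y. x\<^sup>2 + y\<^sup>2 = (a1* x + b1* y)\<^sup>2 + (a2* x + b2* y)\<^sup>2"
    and r2: "r\<^sup>2 > 2* d\<^sup>2" and r0: "r > 0" and d0: "d > 0" and dl0: "\<delta> > 0"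
    and v: "v1\<^sup>2 + v2\<^sup>2 = 1" and n: "n1\<^sup>2 + n2\<^sup>2 = 1"
    and S0: "0 \<le> a2* v1 + b2* v2" and SC: "a2* v1 + b2* v2 \<le> a1* v1 + b1* v2"
    and near: "\<delta>\<^sup>2 \<le> (R1 - c1)\<^sup>2 + (R2 - c2)\<^sup>2"
    and E: "(R1 - (c1 - \<delta>* v1 + r* v1))\<^sup>2 + (R2 - (c2 - \<delta>* v2 + r* v2))\<^sup>2 \<ge> r\<^sup>2"
    and F: "(f1 - (c1 - \<delta>* v1 + r* v1))\<^sup>2 + (f2 - (c2 - \<delta>* v2 + r* v2))\<^sup>2 \<ge> r\<^sup>2"
    and Lw: "(L1 - (c1 - \<delta>* v1 - r* v1))\<^sup>2 + (L2 - (c2 - \<delta>* v2 - r* v2))\<^sup>2 \<ge> r\<^sup>2"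
    and H1: "(L1 - (f1 + r* n1))\<^sup>2 + (L2 - (f2 + r* n2))\<^sup>2 \<ge> r\<^sup>2"
    and H2: "(L1 - (f1 - r* n1))\<^sup>2 + (L2 - (f2 - r* n2))\<^sup>2 \<ge> r\<^sup>2"
    and H3: "((c1 - \<delta>* v1) - (f1 + r* n1))\<^sup>2 + ((c2 - \<delta>* v2) - (f2 + r* n2))\<^sup>2 \<ge> r\<^sup>2"
    and H4: "((c1 - \<delta>* v1) - (f1 - r* n1))\<^sup>2 + ((c2 - \<delta>* v2) - (f2 - r* n2))\<^sup>2 \<ge> r\<^sup>2"
    and R1e: "a1*(R1 - c1) + b1*(R2 - c2) = d" and R2e: "\<bar>a2*(R1 - c1) + b2*(R2 - c2)\<bar> \<le> d"
    and L1e: "a1*(L1 - c1) + b1*(L2 - c2) = -d" and L2e: "\<bar>a2*(L1 - c1) + b2*(L2 - c2)\<bar> \<le> d"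
    and f1a: "0 \<le> a1*(f1 - c1) + b1*(f2 - c2)" and f1b: "a1*(f1 - c1) + b1*(f2 - c2) \<le> d"
    and f2a: "0 \<le> a2*(f1 - c1) + b2*(f2 - c2)" and f2b: "a2*(f1 - c1) + b2*(f2 - c2) \<le> d"
  shows False
proof -
  define C where "C = a1* v1 + b1* v2"
  define S where "S = a2* v1 + b2* v2"
  define Y where "Y = a2*(R1 - c1) + b2*(R2 - c2)"
  define Lc where "Lc = a2*(L1 - c1) + b2*(L2 - c2)"
  define A where "A = a1*(f1 - c1) + b1*(f2 - c2)"
  define B where "B = a2*(f1 - c1) + b2*(f2 - c2)"
  define N1 where "N1 = a1* n1 + b1* n2"
  define N2 where "N2 = a2* n1 + b2* n2"
  have T: "P1\<^sup>2 + P2\<^sup>2 = X\<^sup>2 + Yv\<^sup>2" if "a1* P1 + b1* P2 = X" "a2* P1 + b2* P2 = Yv" for P1 P2 X Yv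
    using fr[of P1 P2] that by simp
  show False
  proof (rule core_d[of d r C S \<delta> Y Lc A B N1 N2])
    show "r\<^sup>2 > 2* d\<^sup>2" by (fact r2)
    show "r > 0" by (fact r0)
    show "d > 0" by (fact d0)
    show "\<delta> > 0" by (fact dl0)
    show "C\<^sup>2 + S\<^sup>2 = 1" using fr[of v1 v2] v unfolding C_def S_def by simp
    show "N1\<^sup>2 + N2\<^sup>2 = 1" using fr[of n1 n2] n unfolding N1_def N2_def by simp
    show "0 \<le> S" "S \<le> C" using S0 SC unfolding S_def C_def by simp_all
    show "\<bar>Y\<bar> \<le> d" "\<bar>Lc\<bar> \<le> d" using R2e L2e unfolding Y_def Lc_def by simp_all
    show "0 \<le> A" "A \<le> d" "0 \<le> B" "B \<le> d" using f1a f1b f2a f2b unfolding A_def B_def by simp_all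
    show "\<delta>\<^sup>2 \<le> d\<^sup>2 + Y\<^sup>2" using near T[of "R1 - c1" "R2 - c2" d Y] R1e unfolding Y_def by simp
    show "(d - (r-\<delta>)* C)\<^sup>2 + (Y - (r-\<delta>)* S)\<^sup>2 \<ge> r\<^sup>2"
    proof -
      have "a1*(R1 - (c1 - \<delta>* v1 + r* v1)) + b1*(R2 - (c2 - \<delta>* v2 + r* v2)) = (a1*(R1 - c1) + b1*(R2 - c2)) - (r-\<delta>)* C"
        unfolding C_def by (simp add: algebra_simps)
      hence x: "a1*(R1 - (c1 - \<delta>* v1 + r* v1)) + b1*(R2 - (c2 - \<delta>* v2 + r* v2)) = d - (r-\<delta>)* C" using R1e by simp
      have y: "a2*(R1 - (c1 - \<delta>* v1 + r* v1)) + b2*(R2 - (c2 - \<delta>* v2 + r* v2)) = Y - (r-\<delta>)* S"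
        unfolding Y_def S_def by (simp add: algebra_simps)
      show ?thesis using E T[OF x y] by simp
    qed
    show "(A - (r-\<delta>)* C)\<^sup>2 + (B - (r-\<delta>)* S)\<^sup>2 \<ge> r\<^sup>2"
    proof -
      have x: "a1*(f1 - (c1 - \<delta>* v1 + r* v1)) + b1*(f2 - (c2 - \<delta>* v2 + r* v2)) = A - (r-\<delta>)* C"
        unfolding A_def C_def by (simp add: algebra_simps)
      have y: "a2*(f1 - (c1 - \<delta>* v1 + r* v1)) + b2*(f2 - (c2 - \<delta>* v2 + r* v2)) = B - (r-\<delta>)* S"
        unfolding B_def S_def by (simp add: algebra_simps)
      show ?thesis using F T[OF x y] by simp
    qed
    show "(-d + (r+\<delta>)* C)\<^sup>2 + (Lc + (r+\<delta>)* S)\<^sup>2 \<ge> r\<^sup>2"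
    proof -
      have "a1*(L1 - (c1 - \<delta>* v1 - r* v1)) + b1*(L2 - (c2 - \<delta>* v2 - r* v2)) = (a1*(L1 - c1) + b1*(L2 - c2)) + (r+\<delta>)* C"
        unfolding C_def by (simp add: algebra_simps)
      hence x: "a1*(L1 - (c1 - \<delta>* v1 - r* v1)) + b1*(L2 - (c2 - \<delta>* v2 - r* v2)) = -d + (r+\<delta>)* C" using L1e by simp
      have y: "a2*(L1 - (c1 - \<delta>* v1 - r* v1)) + b2*(L2 - (c2 - \<delta>* v2 - r* v2)) = Lc + (r+\<delta>)* S"
        unfolding Lc_def S_def by (simp add: algebra_simps)
      show ?thesis using Lw T[OF x y] by simp
    qed
    show "(-d - A - r* N1)\<^sup>2 + (Lc - B - r* N2)\<^sup>2 \<ge> r\<^sup>2"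
    proof -
      have "a1*(L1 - (f1 + r* n1)) + b1*(L2 - (f2 + r* n2)) = (a1*(L1 - c1) + b1*(L2 - c2)) - A - r* N1"
        unfolding A_def N1_def by (simp add: algebra_simps)
      hence x: "a1*(L1 - (f1 + r* n1)) + b1*(L2 - (f2 + r* n2)) = -d - A - r* N1" using L1e by simp
      have y: "a2*(L1 - (f1 + r* n1)) + b2*(L2 - (f2 + r* n2)) = Lc - B - r* N2"
        unfolding Lc_def B_def N2_def by (simp add: algebra_simps)
      show ?thesis using H1 T[OF x y] by simp
    qed
    show "(-d - A + r* N1)\<^sup>2 + (Lc - B + r* N2)\<^sup>2 \<ge> r\<^sup>2"
    proof -
      have "a1*(L1 - (f1 - r* n1)) + b1*(L2 - (f2 - r* n2)) = (a1*(L1 - c1) + b1*(L2 - c2)) - A + r* N1"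
        unfolding A_def N1_def by (simp add: algebra_simps)
      hence x: "a1*(L1 - (f1 - r* n1)) + b1*(L2 - (f2 - r* n2)) = -d - A + r* N1" using L1e by simp
      have y: "a2*(L1 - (f1 - r* n1)) + b2*(L2 - (f2 - r* n2)) = Lc - B + r* N2"
        unfolding Lc_def B_def N2_def by (simp add: algebra_simps)
      show ?thesis using H2 T[OF x y] by simp
    qed
    show "(-\<delta>* C - A - r* N1)\<^sup>2 + (-\<delta>* S - B - r* N2)\<^sup>2 \<ge> r\<^sup>2"
    proof -
      have x: "a1*((c1 - \<delta>* v1) - (f1 + r* n1)) + b1*((c2 - \<delta>* v2) - (f2 + r* n2)) = -\<delta>* C - A - r* N1"
        unfolding A_def C_def N1_def by (simp add: algebra_simps)
      have y: "a2*((c1 - \<delta>* v1) - (f1 + r* n1)) + b2*((c2 - \<delta>* v2) - (f2 + r* n2)) = -\<delta>* S - B - r* N2"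
        unfolding B_def S_def N2_def by (simp add: algebra_simps)
      show ?thesis using H3 T[OF x y] by simp
    qed
    show "(-\<delta>* C - A + r* N1)\<^sup>2 + (-\<delta>* S - B + r* N2)\<^sup>2 \<ge> r\<^sup>2"
    proof -
      have x: "a1*((c1 - \<delta>* v1) - (f1 - r* n1)) + b1*((c2 - \<delta>* v2) - (f2 - r* n2)) = -\<delta>* C - A + r* N1"
        unfolding A_def C_def N1_def by (simp add: algebra_simps)
      have y: "a2*((c1 - \<delta>* v1) - (f1 - r* n1)) + b2*((c2 - \<delta>* v2) - (f2 - r* n2)) = -\<delta>* S - B + r* N2"
        unfolding B_def S_def N2_def by (simp add: algebra_simps)
      show ?thesis using H4 T[OF x y] by simp
    qed
  qed
qed


lemma norm_sq: "(norm v)\<^sup>2 = (fst v)\<^sup>2 + (snd v)\<^sup>2" for v :: "real \<times> real"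
  using dist_sq[of v 0] by simp

lemma dge: "0 \<le> r \<Longrightarrow> r \<le> dist p q \<Longrightarrow> r\<^sup>2 \<le> (fst q - fst p)\<^sup>2 + (snd q - snd p)\<^sup>2" for p q :: "real \<times> real"
  using dist_ge_sq[of r q p] by (simp add: dist_commute)

lemma apply_frame:
  fixes c z v R L f n :: "real \<times> real" and a1 b1 a2 b2 r d \<delta> :: real
  assumes fr: "\<And>x y. x\<^sup>2 + y\<^sup>2 = (a1* x + b1* y)\<^sup>2 + (a2* x + b2* y)\<^sup>2"
    and r2: "r\<^sup>2 > 2* d\<^sup>2" and r0: "r > 0" and d0: "d > 0" and dl0: "\<delta> > 0"
    and nv: "norm v = 1" and nn: "norm n = 1" and zv: "z = c - \<delta> *\<^sub>R v"
    and S0: "0 \<le> a2* fst v + b2* snd v" and SC: "a2* fst v + b2* snd v \<le> a1* fst v + b1* snd v"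
    and near: "\<delta> \<le> dist c R"
    and E: "r \<le> dist (z + r *\<^sub>R v) R" and F: "r \<le> dist (z + r *\<^sub>R v) f" and Lw: "r \<le> dist (z - r *\<^sub>R v) L"
    and H1: "r \<le> dist (f + r *\<^sub>R n) L" and H2: "r \<le> dist (f - r *\<^sub>R n) L"
    and H3: "r \<le> dist (f + r *\<^sub>R n) z" and H4: "r \<le> dist (f - r *\<^sub>R n) z"
    and R1e: "a1*(fst R - fst c) + b1*(snd R - snd c) = d" and R2e: "\<bar>a2*(fst R - fst c) + b2*(snd R - snd c)\<bar> \<le> d"
    and L1e: "a1*(fst L - fst c) + b1*(snd L - snd c) = -d" and L2e: "\<bar>a2*(fst L - fst c) + b2*(snd L - snd c)\<bar> \<le> d"
    and f1a: "0 \<le> a1*(fst f - fst c) + b1*(snd f - snd c)" and f1b: "a1*(fst f - fst c) + b1*(snd f - snd c) \<le> d"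
    and f2a: "0 \<le> a2*(fst f - fst c) + b2*(snd f - snd c)" and f2b: "a2*(fst f - fst c) + b2*(snd f - snd c) \<le> d"
  shows False
proof (rule vec_core[OF fr r2 r0 d0 dl0 _ _ S0 SC _ _ _ _ _ _ _ _ R1e R2e L1e L2e f1a f1b f2a f2b])
  show "(fst v)\<^sup>2 + (snd v)\<^sup>2 = 1" using nv norm_sq[of v] by simp
  show "(fst n)\<^sup>2 + (snd n)\<^sup>2 = 1" using nn norm_sq[of n] by simp
  have r00: "0 \<le> r" using r0 by simp
  have zf: "fst z = fst c - \<delta> * fst v" "snd z = snd c - \<delta> * snd v" using zv by simp_all
  show "\<delta>\<^sup>2 \<le> (fst R - fst c)\<^sup>2 + (snd R - snd c)\<^sup>2" using dge[OF _ near] dl0 by simp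
  show "(fst R - (fst c - \<delta>* fst v + r* fst v))\<^sup>2 + (snd R - (snd c - \<delta>* snd v + r* snd v))\<^sup>2 \<ge> r\<^sup>2"
    using dge[OF r00 E] zf by simp
  show "(fst f - (fst c - \<delta>* fst v + r* fst v))\<^sup>2 + (snd f - (snd c - \<delta>* snd v + r* snd v))\<^sup>2 \<ge> r\<^sup>2"
    using dge[OF r00 F] zf by simp
  show "(fst L - (fst c - \<delta>* fst v - r* fst v))\<^sup>2 + (snd L - (snd c - \<delta>* snd v - r* snd v))\<^sup>2 \<ge> r\<^sup>2"
    using dge[OF r00 Lw] zf by simp
  show "(fst L - (fst f + r* fst n))\<^sup>2 + (snd L - (snd f + r* snd n))\<^sup>2 \<ge> r\<^sup>2"
    using dge[OF r00 H1] by simp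
  show "(fst L - (fst f - r* fst n))\<^sup>2 + (snd L - (snd f - r* snd n))\<^sup>2 \<ge> r\<^sup>2"
    using dge[OF r00 H2] by simp
  show "((fst c - \<delta>* fst v) - (fst f + r* fst n))\<^sup>2 + ((snd c - \<delta>* snd v) - (snd f + r* snd n))\<^sup>2 \<ge> r\<^sup>2"
    using dge[OF r00 H3] zf by simp
  show "((fst c - \<delta>* fst v) - (fst f - r* fst n))\<^sup>2 + ((snd c - \<delta>* snd v) - (snd f - r* snd n))\<^sup>2 \<ge> r\<^sup>2"
    using dge[OF r00 H4] zf by simp
qed


lemma frontier_normal_horn:
  assumes reg: "r_regular r X" and r0: "r > 0" and f: "f \<in> frontier X"
  shows "\<exists>n. norm n = 1 \<and> (\<forall>y\<in>frontier X. r \<le> dist (f + r *\<^sub>R n) y \<and> r \<le> dist (f - r *\<^sub>R n) y)"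
proof -
  have clX: "closed X" using reg unfolding r_regular_def by simp
  obtain n where nn: "norm n = 1" and Bb: "ball (f + r *\<^sub>R n) r \<subseteq> X" and Bw: "ball (f - r *\<^sub>R n) r \<subseteq> - X"
    using reg_normal[OF reg r0 f] by blast
  show ?thesis using nn horn_b[OF Bb] horn_w[OF clX Bw] by blast
qed

theorem lemma3p14:
  fixes r d :: real and X :: "(real \<times> real) set" and k l :: int
  assumes "r > 0" and "d > 0" and "d * sqrt 2 < r"
    and "bounded X" and "r_regular r X"
    and "\<forall>i j :: int. (d * of_int i, d * of_int j) \<notin> frontier X"
    and "grey_pixel d X k l" and "grey_pixel d X (k + 1) l"
    and "grey_pixel d X k (l + 1)" and "grey_pixel d X (k + 1) (l + 1)"
  shows "\<not> (\<forall>E \<in> square_edges (d * of_int k) (d * of_int l) (2 * d). frontier X \<inter> E \<noteq> {})"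
proof
  assume all: "\<forall>E \<in> square_edges (d * of_int k) (d * of_int l) (2 * d). frontier X \<inter> E \<noteq> {}"
  note r0 = assms(1) and d0 = assms(2) and reg = assms(5)
  define a where "a = d * of_int k"
  define b where "b = d * of_int l"
  have ak: "d * of_int (k+1) = a + d" "d * of_int (k+2) = a + 2* d" unfolding a_def by (simp_all add: algebra_simps)
  have bl: "d * of_int (l+1) = b + d" "d * of_int (l+2) = b + 2* d" unfolding b_def by (simp_all add: algebra_simps)
  have r2: "r\<^sup>2 > 2* d\<^sup>2"
  proof -
    have "(d * sqrt 2)\<^sup>2 < r\<^sup>2" using assms(3) d0 by (intro power_strict_mono) auto
    thus ?thesis by (simp add: power_mult_distrib)
  qed
  obtain eB where eB: "eB \<in> frontier X" "eB \<in> {a..a+2* d} \<times> {b}"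
    using all unfolding square_edges_def a_def b_def by blast
  obtain eT where eT: "eT \<in> frontier X" "eT \<in> {a..a+2* d} \<times> {b+2* d}"
    using all unfolding square_edges_def a_def b_def by blast
  obtain eL where eL: "eL \<in> frontier X" "eL \<in> {a} \<times> {b..b+2* d}"
    using all unfolding square_edges_def a_def b_def by blast
  obtain eR where eR: "eR \<in> frontier X" "eR \<in> {a+2* d} \<times> {b..b+2* d}"
    using all unfolding square_edges_def a_def b_def by blast
  obtain f00 where f00: "f00 \<in> frontier X" "f00 \<in> pixel d k l" using grey_frontier[OF d0 assms(7)] by blast
  obtain f10 where f10: "f10 \<in> frontier X" "f10 \<in> pixel d (k+1) l" using grey_frontier[OF d0 assms(8)] by blast
  obtain f01 where f01: "f01 \<in> frontier X" "f01 \<in> pixel d k (l+1)" using grey_frontier[OF d0 assms(9)] by blast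
  obtain f11 where f11: "f11 \<in> frontier X" "f11 \<in> pixel d (k+1) (l+1)" using grey_frontier[OF d0 assms(10)] by blast
  have p00: "a \<le> fst f00" "fst f00 \<le> a + d" "b \<le> snd f00" "snd f00 \<le> b + d"
    using f00(2) ak bl unfolding pixel_def a_def b_def by auto
  have p10: "a + d \<le> fst f10" "fst f10 \<le> a + 2* d" "b \<le> snd f10" "snd f10 \<le> b + d"
    using f10(2) ak bl unfolding pixel_def a_def b_def by (auto simp: algebra_simps)
  have p01: "a \<le> fst f01" "fst f01 \<le> a + d" "b + d \<le> snd f01" "snd f01 \<le> b + 2* d"
    using f01(2) ak bl unfolding pixel_def a_def b_def by (auto simp: algebra_simps)
  have p11: "a + d \<le> fst f11" "fst f11 \<le> a + 2* d" "b + d \<le> snd f11" "snd f11 \<le> b + 2* d"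
    using f11(2) ak bl unfolding pixel_def a_def b_def by (auto simp: algebra_simps)
  have qB: "a \<le> fst eB" "fst eB \<le> a + 2* d" "snd eB = b" using eB(2) by auto
  have qT: "a \<le> fst eT" "fst eT \<le> a + 2* d" "snd eT = b + 2* d" using eT(2) by auto
  have qL: "fst eL = a" "b \<le> snd eL" "snd eL \<le> b + 2* d" using eL(2) by auto
  have qR: "fst eR = a + 2* d" "b \<le> snd eR" "snd eR \<le> b + 2* d" using eR(2) by auto
  define c where "c = (a + d, b + d)"
  have cF: "c \<notin> frontier X" using assms(6) ak bl unfolding c_def by metis
  have ne: "frontier X \<noteq> {}" using eB by blast
  obtain z v \<delta> where zF: "z \<in> frontier X" and dl0: "\<delta> > 0" and near: "\<forall>y\<in>frontier X. \<delta> \<le> dist c y"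
    and nv: "norm v = 1" and zv: "z = c - \<delta> *\<^sub>R v"
    and hz: "\<forall>y\<in>frontier X. r \<le> dist (z + r *\<^sub>R v) y \<and> r \<le> dist (z - r *\<^sub>R v) y"
    using nearest_normal[OF reg r0 cF ne] by blast
  have W: False
    if fr: "\<And>x y. x\<^sup>2 + y\<^sup>2 = (a1* x + b1* y)\<^sup>2 + (a2* x + b2* y)\<^sup>2"
      and S0: "0 \<le> a2* fst v + b2* snd v" and SC: "a2* fst v + b2* snd v \<le> a1* fst v + b1* snd v"
      and RF: "R \<in> frontier X" and LF: "L \<in> frontier X" and fF: "f \<in> frontier X"
      and R1e: "a1*(fst R - fst c) + b1*(snd R - snd c) = d" and R2e: "\<bar>a2*(fst R - fst c) + b2*(snd R - snd c)\<bar> \<le> d"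
      and L1e: "a1*(fst L - fst c) + b1*(snd L - snd c) = -d" and L2e: "\<bar>a2*(fst L - fst c) + b2*(snd L - snd c)\<bar> \<le> d"
      and f1a: "0 \<le> a1*(fst f - fst c) + b1*(snd f - snd c)" and f1b: "a1*(fst f - fst c) + b1*(snd f - snd c) \<le> d"
      and f2a: "0 \<le> a2*(fst f - fst c) + b2*(snd f - snd c)" and f2b: "a2*(fst f - fst c) + b2*(snd f - snd c) \<le> d"
    for a1 b1 a2 b2 :: real and R L f :: "real \<times> real"
  proof -
    obtain n where nn: "norm n = 1" and hf: "\<forall>y\<in>frontier X. r \<le> dist (f + r *\<^sub>R n) y \<and> r \<le> dist (f - r *\<^sub>R n) y"
      using frontier_normal_horn[OF reg r0 fF] by blast
    show False
      using apply_frame[OF fr r2 r0 d0 dl0 nv nn zv S0 SC _ _ _ _ _ _ _ _ R1e R2e L1e L2e f1a f1b f2a f2b]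
        near hz hf RF LF fF zF by blast
  qed
  have cc: "fst c = a + d" "snd c = b + d" unfolding c_def by simp_all
  consider (c1) "snd v \<ge> 0" "fst v \<ge> snd v" | (c2) "snd v \<le> 0" "fst v \<ge> - snd v"
    | (c3) "snd v \<ge> 0" "- fst v \<ge> snd v" | (c4) "snd v \<le> 0" "- fst v \<ge> - snd v"
    | (c5) "fst v \<ge> 0" "snd v \<ge> fst v" | (c6) "fst v \<le> 0" "snd v \<ge> - fst v"
    | (c7) "fst v \<ge> 0" "- snd v \<ge> fst v" | (c8) "fst v \<le> 0" "- snd v \<ge> - fst v"
    by argo
  then show False
  proof cases
    case c1 show False by (rule W[of 1 0 0 1 eR eL f11]) (use c1 eR eL f11 qR qL p11 cc in \<open>auto simp: abs_le_iff\<close>)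
  next
    case c2 show False by (rule W[of 1 0 0 "-1" eR eL f10]) (use c2 eR eL f10 qR qL p10 cc in \<open>auto simp: abs_le_iff\<close>)
  next
    case c3 show False by (rule W[of "-1" 0 0 1 eL eR f01]) (use c3 eR eL f01 qR qL p01 cc in \<open>auto simp: abs_le_iff\<close>)
  next
    case c4 show False by (rule W[of "-1" 0 0 "-1" eL eR f00]) (use c4 eR eL f00 qR qL p00 cc in \<open>auto simp: abs_le_iff\<close>)
  next
    case c5 show False by (rule W[of 0 1 1 0 eT eB f11]) (use c5 eT eB f11 qT qB p11 cc in \<open>auto simp: abs_le_iff\<close>)
  next
    case c6 show False by (rule W[of 0 1 "-1" 0 eT eB f01]) (use c6 eT eB f01 qT qB p01 cc in \<open>auto simp: abs_le_iff\<close>)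
  next
    case c7 show False by (rule W[of 0 "-1" 1 0 eB eT f10]) (use c7 eT eB f10 qT qB p10 cc in \<open>auto simp: abs_le_iff\<close>)
  next
    case c8 show False by (rule W[of 0 "-1" "-1" 0 eB eT f00]) (use c8 eT eB f00 qT qB p00 cc in \<open>auto simp: abs_le_iff\<close>)
  qed
qed

end
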